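(* Let $V$ be a finite set with positive element weights ($\vert A \vert$ = total weight of $A \subseteq V$), let $\mathcal{P}, \mathcal{P}'$ be partitions of $V$ into nonempty parts, and let $P_i', P_j' \in \mathcal{P}'$ be distinct. Define $\phi^*_{i',j'} : 2^{\mathcal{P}} \to \mathbb{R}$ by $$\phi^*_{i',j'}(\mathcal{S}) := \vert U_{\mathcal{S}} \cap P_j' \vert + \vert P_i' \vert - \vert U_{\mathcal{S}} \cap P_i' \vert + \sum_{P' \in \mathcal{P}' \setminus \{P_i', P_j'\}} \vert P' \vert \operatorname{peak}\Big(\frac{\vert U_{\mathcal{S}} \cap P' \vert}{\vert P' \vert}\Big).$$ Then $\phi^*_{i',j'}$ is submodular, and it is not symmetric in general: there exist $V$, $\mathcal{P}$, $\mathcal{P}'$, $P_i'$, $P_j'$ and $\mathcal{S} \subseteq \mathcal{P}$ with $\phi^*_{i',j'}(\mathcal{S}) \ne \phi^*_{i',j'}(\mathcal{P} \setminus \mathcal{S})$.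
   Context: $U_{\mathcal{S}}$ denotes the union of the sets in $\mathcal{S}$; $\operatorname{peak}(x) = x$ for $x \le 1/2$ and $1-x$ for $x > 1/2$. A function $\Pi : 2^{\mathcal{P}} \to \mathbb{R}$ is submodular if $\Pi(\mathcal{S}_1 \cup \mathcal{S}_2) \le \Pi(\mathcal{S}_1) + \Pi(\mathcal{S}_2) - \Pi(\mathcal{S}_1 \cap \mathcal{S}_2)$ for all $\mathcal{S}_1, \mathcal{S}_2$, and symmetric if $\Pi(\mathcal{S}) = \Pi(\mathcal{P} \setminus \mathcal{S})$ for all $\mathcal{S}$. *)

theory Defs
  imports "HOL-Analysis.Analysis"
begin

definition wt :: "('a \<Rightarrow> real) \<Rightarrow> 'a set \<Rightarrow> real" where
  "wt w A = (\<Sum>x\<in>A. w x)"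

definition peak :: "real \<Rightarrow> real" where
  "peak x = (if x \<le> 1/2 then x else 1 - x)"

definition is_partition :: "'a set \<Rightarrow> 'a set set \<Rightarrow> bool" where
  "is_partition V P \<longleftrightarrow> (\<Union>P = V) \<and> (\<forall>A\<in>P. A \<noteq> {}) \<and>
     (\<forall>A\<in>P. \<forall>B\<in>P. A \<noteq> B \<longrightarrow> A \<inter> B = {})"

abbreviation U :: "'a set set \<Rightarrow> 'a set" where
  "U S \<equiv> \<Union>S"

definition phi_star :: "('a \<Rightarrow> real) \<Rightarrow> 'a set set \<Rightarrow> 'a set \<Rightarrow> 'a set \<Rightarrow> 'a set set \<Rightarrow> real" where
  "phi_star w P' Pa Pb S =
     wt w (U S \<inter> Pb) + wt w Pa - wt w (U S \<inter> Pa) +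
     (\<Sum>Q\<in>P' - {Pa, Pb}. wt w Q * peak (wt w (U S \<inter> Q) / wt w Q))"

definition submodular_on :: "'b set \<Rightarrow> ('b set \<Rightarrow> real) \<Rightarrow> bool" where
  "submodular_on P f \<longleftrightarrow> (\<forall>S1 S2. S1 \<subseteq> P \<longrightarrow> S2 \<subseteq> P \<longrightarrow>
      f (S1 \<union> S2) \<le> f S1 + f S2 - f (S1 \<inter> S2))"

definition symmetric_on :: "'b set \<Rightarrow> ('b set \<Rightarrow> real) \<Rightarrow> bool" where
  "symmetric_on P f \<longleftrightarrow> (\<forall>S. S \<subseteq> P \<longrightarrow> f S = f (P - S))"

end

theory Submission
  imports Defs
begin

lemma peak_scaled: "(t::real) > 0 \<Longrightarrow> t * peak (a / t) = min a (t - a)"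
  unfolding peak_def by (auto simp: field_simps min_def)

lemma min_concave:
  fixes a b c d t :: real
  assumes "c + d = a + b" "d \<le> a" "d \<le> b" "a \<le> c" "b \<le> c"
  shows "min c (t - c) + min d (t - d) \<le> min a (t - a) + min b (t - b)"
  using assms by (simp add: min_def split: if_splits)

lemma arith4:
  fixes A1 A2 A3 A4 B1 B2 B3 B4 C1 C2 C3 C4 k :: real
  shows "A1 + A2 = A3 + A4 \<Longrightarrow> B1 + B2 = B3 + B4 \<Longrightarrow> C1 + C2 \<le> C3 + C4 \<Longrightarrow>
    (A1 + k - B1 + C1) + (A2 + k - B2 + C2) \<le> (A3 + k - B3 + C3) + (A4 + k - B4 + C4)"
  by linarith

lemma wt_modular:
  assumes "finite A"
  shows "wt w ((X \<union> Y) \<inter> A) + wt w ((X \<inter> Y) \<inter> A) = wt w (X \<inter> A) + wt w (Y \<inter> A)"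
proof -
  have "(X \<union> Y) \<inter> A = (X \<inter> A) \<union> (Y \<inter> A)" "(X \<inter> Y) \<inter> A = (X \<inter> A) \<inter> (Y \<inter> A)" by auto
  thus ?thesis unfolding wt_def using assms by (simp add: sum.union_inter)
qed

lemma wt_mono: "finite B \<Longrightarrow> A \<subseteq> B \<Longrightarrow> (\<forall>x\<in>B. w x > 0) \<Longrightarrow> wt w A \<le> wt w B"
  unfolding wt_def by (rule sum_mono2) (auto intro: less_imp_le)

lemma wt_mono2: "finite B \<Longrightarrow> A \<subseteq> C \<Longrightarrow> C \<subseteq> B \<Longrightarrow> (\<forall>x\<in>B. w x > 0) \<Longrightarrow> wt w A \<le> wt w C"
  using wt_mono[of C A w] by (meson finite_subset subset_iff)

lemma wt_pos: "finite B \<Longrightarrow> B \<noteq> {} \<Longrightarrow> (\<forall>x\<in>B. w x > 0) \<Longrightarrow> wt w B > 0"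
  unfolding wt_def by (rule sum_pos) auto

lemma submod_part:
  assumes fin: "finite V" and pos: "\<forall>x\<in>V. w x > 0" and pP: "is_partition V P"
    and pP': "is_partition V P'" and a: "Pa \<in> P'" and b: "Pb \<in> P'"
  shows "submodular_on P (phi_star w P' Pa Pb)"
  unfolding submodular_on_def
proof (intro allI impI)
  fix S1 S2 assume s1: "S1 \<subseteq> P" and s2: "S2 \<subseteq> P"
  define X where "X = U S1"
  define Y where "Y = U S2"
  have un: "U (S1 \<union> S2) = X \<union> Y" unfolding X_def Y_def by auto
  have int: "U (S1 \<inter> S2) = X \<inter> Y"
  proof
    show "U (S1 \<inter> S2) \<subseteq> X \<inter> Y" unfolding X_def Y_def by auto
    show "X \<inter> Y \<subseteq> U (S1 \<inter> S2)"
    proof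
      fix x assume "x \<in> X \<inter> Y"
      then obtain A B where "A \<in> S1" "B \<in> S2" "x \<in> A" "x \<in> B" unfolding X_def Y_def by auto
      moreover have "A = B" using pP s1 s2 calculation unfolding is_partition_def by blast
      ultimately show "x \<in> U (S1 \<inter> S2)" by auto
    qed
  qed
  have finP': "finite P'" using pP' fin unfolding is_partition_def by (metis finite_UnionD)
  have QV: "Q \<in> P' \<Longrightarrow> Q \<subseteq> V" for Q using pP' unfolding is_partition_def by auto
  have finQ: "Q \<in> P' \<Longrightarrow> finite Q" for Q using QV fin finite_subset by blast
  have finPa: "finite Pa" and finPb: "finite Pb" using finQ a b by auto
  have tineq: "wt w Q * peak (wt w ((X \<union> Y) \<inter> Q) / wt w Q) + wt w Q * peak (wt w ((X \<inter> Y) \<inter> Q) / wt w Q)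
     \<le> wt w Q * peak (wt w (X \<inter> Q) / wt w Q) + wt w Q * peak (wt w (Y \<inter> Q) / wt w Q)"
    if Q: "Q \<in> P'" for Q
  proof -
    have fq: "finite Q" using finQ Q .
    have pq: "\<forall>x\<in>Q. w x > 0" using QV Q pos by auto
    have t: "wt w Q > 0" using wt_pos[OF fq _ pq] pP' Q unfolding is_partition_def by auto
    show ?thesis unfolding peak_scaled[OF t]
      apply (rule min_concave)
      using wt_modular[OF fq, of w X Y]
      by (auto intro!: wt_mono2[OF fq _ _ pq])
  qed
  show "phi_star w P' Pa Pb (S1 \<union> S2)
         \<le> phi_star w P' Pa Pb S1 + phi_star w P' Pa Pb S2 - phi_star w P' Pa Pb (S1 \<inter> S2)"
  proof -
    let ?f = "\<lambda>Z Q. wt w Q * peak (wt w (Z \<inter> Q) / wt w Q)"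
    have sf: "(\<Sum>Q\<in>P' - {Pa, Pb}. ?f (X \<union> Y) Q) + (\<Sum>Q\<in>P' - {Pa, Pb}. ?f (X \<inter> Y) Q)
        \<le> (\<Sum>Q\<in>P' - {Pa, Pb}. ?f X Q) + (\<Sum>Q\<in>P' - {Pa, Pb}. ?f Y Q)"
      unfolding sum.distrib[symmetric] by (rule sum_mono) (use tineq in auto)
    have ph: "phi_star w P' Pa Pb S = wt w (U S \<inter> Pb) + wt w Pa - wt w (U S \<inter> Pa) +
       (\<Sum>Q\<in>P' - {Pa, Pb}. ?f (U S) Q)" for S unfolding phi_star_def by simp
    have "phi_star w P' Pa Pb (S1 \<union> S2) + phi_star w P' Pa Pb (S1 \<inter> S2)
       \<le> phi_star w P' Pa Pb S1 + phi_star w P' Pa Pb S2"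
      unfolding ph un int unfolding X_def[symmetric] Y_def[symmetric]
      by (rule arith4[OF wt_modular[OF finPb, of w X Y] wt_modular[OF finPa, of w X Y] sf])
    thus ?thesis by linarith
  qed
qed

lemma ex_part: "\<exists>(V :: nat set) w P P' Pa Pb.
            finite V \<and> (\<forall>x\<in>V. w x > 0) \<and> is_partition V P \<and> is_partition V P' \<and>
            Pa \<in> P' \<and> Pb \<in> P' \<and> Pa \<noteq> Pb \<and>
            \<not> symmetric_on P (phi_star w P' Pa Pb)"
proof -
  let ?P = "{{0::nat},{1}}"
  have d: "?P - {{0}, {1}} = {}" by auto
  have i1: "{0::nat} \<inter> {1} = {}" "{1::nat} \<inter> {0} = {}" by auto
  have e1: "?P - {{0}} = {{1}}" by auto
  have e2: "phi_star (\<lambda>_. 1) ?P {0} {1} {{0}} = 0"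
    unfolding phi_star_def d i1 by (simp add: wt_def)
  have e3: "phi_star (\<lambda>_. 1) ?P {0} {1} {{1}} = 2"
    unfolding phi_star_def d i1 by (simp add: wt_def)
  have ns: "\<not> symmetric_on ?P (phi_star (\<lambda>_. 1) ?P {0} {1})"
  proof
    assume a: "symmetric_on ?P (phi_star (\<lambda>_. 1) ?P {0} {1})"
    have sub: "{{0::nat}} \<subseteq> ?P" by simp
    have "phi_star (\<lambda>_. 1) ?P {0} {1} {{0}} = phi_star (\<lambda>_. 1) ?P {0} {1} (?P - {{0}})"
      using mp[OF spec[OF a[unfolded symmetric_on_def], of "{{0}}"] sub] .
    hence "(0::real) = 2" by (simp only: e1 e2 e3)
    thus False by simp
  qed
  have ip: "is_partition {0,1} ?P" unfolding is_partition_def by auto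
  have f: "finite {0::nat,1}" by simp
  have p: "\<forall>x\<in>{0::nat,1}. (\<lambda>_. 1::real) x > 0" by simp
  have m: "{0} \<in> ?P" "{1} \<in> ?P" "{0} \<noteq> {1::nat}" by auto
  show ?thesis
    apply (rule exI[of _ "{0::nat,1}"], rule exI[of _ "\<lambda>_. 1::real"], rule exI[of _ ?P],
           rule exI[of _ ?P], rule exI[of _ "{0::nat}"], rule exI[of _ "{1::nat}"])
    using ns ip f p m by (intro conjI)
qed

theorem proposition10:
  shows "(\<forall>(V :: 'a set) w P P' Pa Pb.
            finite V \<and> (\<forall>x\<in>V. w x > 0) \<and> is_partition V P \<and> is_partition V P' \<and>
            Pa \<in> P' \<and> Pb \<in> P' \<and> Pa \<noteq> Pb
            \<longrightarrow> submodular_on P (phi_star w P' Pa Pb))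
       \<and> (\<exists>(V :: nat set) w P P' Pa Pb.
            finite V \<and> (\<forall>x\<in>V. w x > 0) \<and> is_partition V P \<and> is_partition V P' \<and>
            Pa \<in> P' \<and> Pb \<in> P' \<and> Pa \<noteq> Pb \<and>
            \<not> symmetric_on P (phi_star w P' Pa Pb))"
proof (intro conjI)
  show "\<forall>(V :: 'a set) w P P' Pa Pb.
            finite V \<and> (\<forall>x\<in>V. w x > 0) \<and> is_partition V P \<and> is_partition V P' \<and>
            Pa \<in> P' \<and> Pb \<in> P' \<and> Pa \<noteq> Pb
            \<longrightarrow> submodular_on P (phi_star w P' Pa Pb)"
    using submod_part by blast
  show "\<exists>(V :: nat set) w P P' Pa Pb.
            finite V \<and> (\<forall>x\<in>V. w x > 0) \<and> is_partition V P \<and> is_partition V P' \<and>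
            Pa \<in> P' \<and> Pb \<in> P' \<and> Pa \<noteq> Pb \<and>
            \<not> symmetric_on P (phi_star w P' Pa Pb)" by (rule ex_part)
qed

end
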